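(* Let $m,n,p,q\in\mathbb{R}$ with $m<0$, and let $P(t)=t^5+mt^3+nt^2+pt+q$. Set $u=\frac{2\sqrt{-m}}{\sqrt5}$, $\alpha=\frac{16n}{u^3}$, $\beta=\frac{16p}{u^4}-5$, $\gamma=\frac{16q}{u^5}$, and $f(\theta)=\alpha\cos^2\theta+\beta\cos\theta+\cos 5\theta+\gamma$. Let $N_{\mathrm{int}}$ be the number of zeros of $f$ in $[0,\pi]$ and $N_{\mathrm{ext}}$ the number of real roots of $P$ outside $[-u,u]$. Then all five roots of $P(t)=0$ are real if and only if $N_{\mathrm{int}}+N_{\mathrm{ext}}=5$. Moreover, if $f(0)\ge 0$, $f(\pi)\le 0$, and $f$ has five zeros in $[0,\pi]$, then all five roots of $P$ lie in $[-u,u]$, and they are $t_k=u\cos\theta_k$, $k=1,\dots,5$, where $0\le\theta_1<\cdots<\theta_5\le\pi$ are the five zeros of $f$.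
   Context: Roots of $P$ are its complex roots; $P$ has real coefficients, so nonreal roots occur in conjugate pairs. Note $f(0)=\alpha+\beta+1+\gamma$ and $f(\pi)=\alpha-\beta-1+\gamma$. *)

theory Defs
  imports "HOL-Analysis.Analysis" "HOL-Computational_Algebra.Polynomial"
begin

definition quinticP :: "real \<Rightarrow> real \<Rightarrow> real \<Rightarrow> real \<Rightarrow> real poly" where
  "quinticP m n p q = [:q, p, n, m, 0, 1:]"

definition uu :: "real \<Rightarrow> real" where
  "uu m = 2 * sqrt (- m) / sqrt 5"

definition alpha :: "real \<Rightarrow> real \<Rightarrow> real" where
  "alpha m n = 16 * n / (uu m) ^ 3"

definition beta :: "real \<Rightarrow> real \<Rightarrow> real" where
  "beta m p = 16 * p / (uu m) ^ 4 - 5"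

definition gamma' :: "real \<Rightarrow> real \<Rightarrow> real" where
  "gamma' m q = 16 * q / (uu m) ^ 5"

definition ftrig :: "real \<Rightarrow> real \<Rightarrow> real \<Rightarrow> real \<Rightarrow> real \<Rightarrow> real" where
  "ftrig m n p q \<theta> = alpha m n * (cos \<theta>)^2 + beta m p * cos \<theta> + cos (5 * \<theta>) + gamma' m q"

definition fzeros :: "real \<Rightarrow> real \<Rightarrow> real \<Rightarrow> real \<Rightarrow> real set" where
  "fzeros m n p q = {\<theta> \<in> {0..pi}. ftrig m n p q \<theta> = 0}"

definition N_int :: "real \<Rightarrow> real \<Rightarrow> real \<Rightarrow> real \<Rightarrow> nat" where
  "N_int m n p q = (\<Sum>\<theta>\<in>fzeros m n p q. order (uu m * cos \<theta>) (quinticP m n p q))"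

definition N_ext :: "real \<Rightarrow> real \<Rightarrow> real \<Rightarrow> real \<Rightarrow> nat" where
  "N_ext m n p q = (\<Sum>t\<in>{t. poly (quinticP m n p q) t = 0 \<and> \<bar>t\<bar> > uu m}. order t (quinticP m n p q))"

end

theory Submission imports Defs "HOL-Computational_Algebra.Fundamental_Theorem_Algebra" begin

lemma cos5: "cos (5 * (x::real)) = 16 * cos x ^ 5 - 20 * cos x ^ 3 + 5 * cos x"
proof -
  have "5 * x = x + x + x + x + x" by simp
  hence "cos (5*x) = cos (x + x + x + x + x)" by simp
  also have "\<dots> = 16 * cos x ^ 5 - 20 * cos x ^ 3 + 5 * cos x"
    unfolding cos_add sin_add using sin_squared_eq[of x] by algebra
  finally show ?thesis .
qed

lemma map_of_real_mult: "map_poly complex_of_real (p * q) = map_poly of_real p * map_poly of_real q"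
  by (rule poly_eqI) (simp add: coeff_mult coeff_map_poly)

lemma poly_map_of_real: "poly (map_poly complex_of_real p) (of_real x) = of_real (poly p x)"
  by (induction p) (auto simp: map_poly_pCons)

lemma order_map_of_real:
  assumes "p \<noteq> 0"
  shows "order (complex_of_real t) (map_poly of_real p) = order t p"
proof -
  obtain q where q: "p = [:- t, 1:] ^ order t p * q" "\<not> [:- t, 1:] dvd q"
    using order_decomp[OF assms] by blast
  have pq: "poly q t \<noteq> 0" using q(2) poly_eq_0_iff_dvd by blast
  have "map_poly complex_of_real ([:- t, 1:] ^ k) = [:- of_real t, 1:] ^ k" for k
    by (induction k) (simp_all only: power_0 power_Suc map_of_real_mult, simp_all add: map_poly_pCons)
  hence e: "map_poly complex_of_real p = [:- of_real t, 1:] ^ order t p * map_poly of_real q"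
    by (subst q(1)) (simp add: map_of_real_mult)
  have qn: "map_poly complex_of_real q \<noteq> 0" using q(1) assms by (auto simp: map_poly_eq_0_iff)
  show ?thesis unfolding e
    by (subst order_mult) (use qn pq in \<open>auto simp: order_power_n_n poly_map_of_real intro!: order_0I\<close>)
qed

lemma deg_sum_order:
  fixes p :: "complex poly"
  assumes "p \<noteq> 0"
  shows "degree p = (\<Sum>z|poly p z = 0. order z p)"
proof -
  have "degree (smult (lead_coeff p) (\<Prod>z|poly p z = 0. [:-z, 1:] ^ order z p)) = (\<Sum>z|poly p z = 0. order z p)"
    using assms by (subst degree_smult_eq) (auto simp: degree_prod_sum_eq degree_linear_power)
  thus ?thesis using complex_poly_decompose[of p] by simp
qed

lemma uu_pos: "m < 0 \<Longrightarrow> uu m > 0"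
  by (simp add: uu_def)

lemma uu_sq: "m < 0 \<Longrightarrow> uu m ^ 2 = - 4 * m / 5"
  by (simp add: uu_def power_divide power_mult_distrib)

lemma poly_f:
  assumes "m < 0"
  shows "poly (quinticP m n p q) (uu m * cos x) = uu m ^ 5 / 16 * ftrig m n p q x"
proof -
  define u where "u = uu m"
  have u: "u > 0" "m = - 5 / 4 * u^2" using uu_pos[OF assms] uu_sq[OF assms] by (simp_all add: u_def)
  define c where "c = cos x"
  have "poly (quinticP m n p q) (u * c) = u ^ 5 / 16 * (16 * n / u ^ 3 * c^2 + (16 * p / u ^ 4 - 5) * c + (16 * c ^ 5 - 20 * c ^ 3 + 5 * c) + 16 * q / u ^ 5)"
    using u(1) unfolding u(2) by (simp add: quinticP_def field_simps) (simp add: algebra_simps power2_eq_square power3_eq_cube numeral_eq_Suc)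
  thus ?thesis unfolding ftrig_def alpha_def beta_def gamma'_def cos5 u_def c_def by simp
qed

lemma quinticP_nz: "quinticP m n p q \<noteq> 0" and quinticP_deg: "degree (quinticP m n p q) = 5"
  by (simp_all add: quinticP_def)

theorem theorem1:
  fixes m n p q :: real
  assumes "m < 0"
  shows "((\<forall>z::complex. poly (map_poly complex_of_real (quinticP m n p q)) z = 0 \<longrightarrow> z \<in> \<real>)
           \<longleftrightarrow> N_int m n p q + N_ext m n p q = 5)
       \<and> (ftrig m n p q 0 \<ge> 0 \<and> ftrig m n p q pi \<le> 0 \<and> card (fzeros m n p q) = 5 \<longrightarrow>
            (\<forall>z::complex. poly (map_poly complex_of_real (quinticP m n p q)) z = 0 \<longrightarrow>
                z \<in> \<real> \<and> - uu m \<le> Re z \<and> Re z \<le> uu m)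
          \<and> (\<forall>\<theta>::nat \<Rightarrow> real. strict_mono_on {1..5} \<theta> \<and> \<theta> ` {1..5} = fzeros m n p q \<longrightarrow>
                quinticP m n p q = (\<Prod>k=1..5. [:- (uu m * cos (\<theta> k)), 1:])))"
proof -
  define P where "P = quinticP m n p q"
  define PC where "PC = map_poly complex_of_real P"
  define u where "u = uu m"
  have u: "u > 0" using uu_pos[OF assms] by (simp add: u_def)
  have Pnz: "P \<noteq> 0" and Pdeg: "degree P = 5" using quinticP_nz quinticP_deg by (simp_all add: P_def)
  have PCnz: "PC \<noteq> 0" using Pnz by (simp add: PC_def map_poly_eq_0_iff)
  have PCdeg: "degree PC = 5" using Pdeg by (simp add: PC_def degree_map_poly)
  have polyPC: "poly PC (of_real t) = of_real (poly P t)" for t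
    by (simp add: PC_def poly_map_of_real)
  have ordPC: "order (of_real t) PC = order t P" for t
    using order_map_of_real[OF Pnz] by (simp add: PC_def)
  have pf: "poly P (u * cos x) = u ^ 5 / 16 * ftrig m n p q x" for x
    using poly_f[OF assms] by (simp add: P_def u_def)
  have pf0: "poly P (u * cos x) = 0 \<longleftrightarrow> ftrig m n p q x = 0" for x
    using pf[of x] u by auto
  define R where "R = {t. poly P t = 0}"
  define Rin where "Rin = {t. poly P t = 0 \<and> \<bar>t\<bar> \<le> u}"
  define Rout where "Rout = {t. poly P t = 0 \<and> \<bar>t\<bar> > u}"
  define CR where "CR = {z. poly PC z = 0}"
  define NR where "NR = {z. poly PC z = 0 \<and> z \<notin> \<real>}"
  have finR: "finite R" using poly_roots_finite[OF Pnz] by (simp add: R_def)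
  have finCR: "finite CR" using poly_roots_finite[OF PCnz] by (simp add: CR_def)
  have RU: "R = Rin \<union> Rout" "Rin \<inter> Rout = {}" by (auto simp: R_def Rin_def Rout_def)
  have finRin: "finite Rin" "finite Rout" using finR RU by auto
  have ordpos: "t \<in> R \<Longrightarrow> order t P > 0" for t using Pnz by (simp add: R_def order_gt_0_iff)
  have ordposC: "z \<in> CR \<Longrightarrow> order z PC > 0" for z using PCnz by (simp add: CR_def order_gt_0_iff)
  have fz: "fzeros m n p q = {x \<in> {0..pi}. ftrig m n p q x = 0}" by (simp add: fzeros_def)
  have bij: "bij_betw (\<lambda>x. u * cos x) (fzeros m n p q) Rin"
  proof (rule bij_betw_imageI)
    show "inj_on (\<lambda>x. u * cos x) (fzeros m n p q)"
      using u by (auto simp: fz inj_on_def intro: cos_inj_pi)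
    show "(\<lambda>x. u * cos x) ` fzeros m n p q = Rin"
    proof
      show "(\<lambda>x. u * cos x) ` fzeros m n p q \<subseteq> Rin"
        using u pf0 by (auto simp: fz Rin_def abs_mult intro!: mult_left_le[of _ u])
      show "Rin \<subseteq> (\<lambda>x. u * cos x) ` fzeros m n p q"
      proof
        fix t assume t: "t \<in> Rin"
        have b: "-1 \<le> t / u" "t / u \<le> 1" using t u by (auto simp: Rin_def divide_simps abs_le_iff)
        have c: "u * cos (arccos (t / u)) = t" using b u by (simp add: cos_arccos)
        have "arccos (t / u) \<in> fzeros m n p q"
          using b t c pf0[of "arccos (t/u)"] by (auto simp: fz Rin_def arccos_lbound arccos_ubound)
        thus "t \<in> (\<lambda>x. u * cos x) ` fzeros m n p q" using c by force
      qed
    qed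
  qed
  have Nint: "N_int m n p q = (\<Sum>t\<in>Rin. order t P)"
    unfolding N_int_def using sum.reindex_bij_betw[OF bij, of "\<lambda>t. order t P"]
    by (simp add: P_def u_def)
  have Next: "N_ext m n p q = (\<Sum>t\<in>Rout. order t P)"
    by (simp add: N_ext_def Rout_def P_def u_def)
  have NR_sum: "N_int m n p q + N_ext m n p q = (\<Sum>t\<in>R. order t P)"
    unfolding Nint Next RU(1) by (rule sum.union_disjoint[symmetric]) (use finRin RU in auto)
  have CRsplit: "CR = of_real ` R \<union> NR" "of_real ` R \<inter> NR = {}"
    by (auto simp: CR_def NR_def R_def polyPC elim!: Reals_cases)
  have "(5::nat) = (\<Sum>z\<in>CR. order z PC)" using deg_sum_order[OF PCnz] PCdeg by (simp add: CR_def)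
  also have "\<dots> = (\<Sum>z\<in>of_real ` R. order z PC) + (\<Sum>z\<in>NR. order z PC)"
    unfolding CRsplit(1) by (rule sum.union_disjoint) (use finCR CRsplit in auto)
  also have "(\<Sum>z\<in>of_real ` R. order z PC) = (\<Sum>t\<in>R. order t P)"
    by (subst sum.reindex) (auto simp: inj_on_def ordPC)
  finally have total: "5 = N_int m n p q + N_ext m n p q + (\<Sum>z\<in>NR. order z PC)"
    using NR_sum by simp
  have finNR: "finite NR" using finCR CRsplit by auto
  have NR0: "(\<Sum>z\<in>NR. order z PC) = 0 \<longleftrightarrow> NR = {}"
  proof -
    have "\<And>z. z \<in> NR \<Longrightarrow> order z PC > 0" using ordposC CRsplit by blast
    thus ?thesis using finNR by (auto simp: sum_eq_0_iff)
  qed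
  have part1: "(\<forall>z. poly PC z = 0 \<longrightarrow> z \<in> \<real>) \<longleftrightarrow> N_int m n p q + N_ext m n p q = 5"
    using total NR0 by (auto simp: NR_def)
  have part2: "(\<forall>z. poly PC z = 0 \<longrightarrow> z \<in> \<real> \<and> - u \<le> Re z \<and> Re z \<le> u)
          \<and> (\<forall>\<theta>::nat \<Rightarrow> real. strict_mono_on {1..5} \<theta> \<and> \<theta> ` {1..5} = fzeros m n p q \<longrightarrow>
                P = (\<Prod>k=1..5. [:- (u * cos (\<theta> k)), 1:]))"
    if card5: "card (fzeros m n p q) = 5"
  proof
    have c5: "card Rin = 5" using bij_betw_same_card[OF bij] card5 by simp
    have "card Rin \<le> (\<Sum>t\<in>Rin. order t P)"
    proof -
      have "\<And>t. t \<in> Rin \<Longrightarrow> 1 \<le> order t P" using ordpos RU by (auto simp: Suc_le_eq)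
      hence "(\<Sum>t\<in>Rin. (1::nat)) \<le> (\<Sum>t\<in>Rin. order t P)" by (intro sum_mono) auto
      thus ?thesis by simp
    qed
    hence "N_int m n p q \<ge> 5" using Nint c5 by simp
    hence Next0: "N_ext m n p q = 0" and NRe: "NR = {}" using total NR0 by auto
    have Rout0: "Rout = {}"
    proof -
      have "\<And>t. t \<in> Rout \<Longrightarrow> order t P > 0" using ordpos RU by blast
      thus ?thesis using Next0 Next finRin by (auto simp: sum_eq_0_iff)
    qed
    show "\<forall>z. poly PC z = 0 \<longrightarrow> z \<in> \<real> \<and> - u \<le> Re z \<and> Re z \<le> u"
    proof (intro allI impI)
      fix z assume z: "poly PC z = 0"
      hence zr: "z \<in> \<real>" using NRe by (auto simp: NR_def)
      then obtain t where t: "z = of_real t" by (auto elim: Reals_cases)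
      have "poly P t = 0" using z polyPC t by simp
      hence "\<bar>t\<bar> \<le> u" using Rout0 by (auto simp: Rout_def)
      thus "z \<in> \<real> \<and> - u \<le> Re z \<and> Re z \<le> u" using zr t by auto
    qed
    show "\<forall>\<theta>::nat \<Rightarrow> real. strict_mono_on {1..5} \<theta> \<and> \<theta> ` {1..5} = fzeros m n p q \<longrightarrow>
                P = (\<Prod>k=1..5. [:- (u * cos (\<theta> k)), 1:])"
    proof (intro allI impI)
      fix \<theta> :: "nat \<Rightarrow> real" assume th: "strict_mono_on {1..5} \<theta> \<and> \<theta> ` {1..5} = fzeros m n p q"
      define Q where "Q = (\<Prod>k=1..5. [:- (u * cos (\<theta> k)), 1:])"
      have injth: "inj_on \<theta> {1..5}" using th strict_mono_on_imp_inj_on by blast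
      have A: "(\<lambda>k. u * cos (\<theta> k)) ` {1..5} = Rin"
      proof -
        have "(\<lambda>x. u * cos x) ` (\<theta> ` {1..5}) = Rin"
          using th[THEN conjunct2] bij_betw_imp_surj_on[OF bij] by (simp only:)
        thus ?thesis unfolding image_image .
      qed
      have Qdeg: "degree Q = 5" by (simp add: Q_def degree_prod_sum_eq)
      have Qlc: "coeff Q 5 = 1" using Qdeg lead_coeff_prod[of "\<lambda>k. [:- (u * cos (\<theta> k)), 1:]" "{1..5}"]
        by (simp add: Q_def)
      have PQ: "poly P z = poly Q z" if zR: "z \<in> Rin" for z
      proof -
        obtain k where k: "k \<in> {1..5}" "z = u * cos (\<theta> k)" using A zR by blast
        have "poly Q z = 0" unfolding Q_def poly_prod using k by (intro prod_zero) auto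
        thus ?thesis using zR by (simp add: Rin_def)
      qed
      have Plc: "coeff P 5 = 1" by (simp add: P_def quinticP_def numeral_eq_Suc)
      have "P = Q"
        by (rule poly_eqI_degree_lead_coeff[of P 5 Q Rin]) (use Qlc Plc Pdeg Qdeg PQ c5 in auto)
      thus "P = (\<Prod>k=1..5. [:- (u * cos (\<theta> k)), 1:])" by (simp add: Q_def)
    qed
  qed
  show ?thesis using part1 part2 by (simp add: P_def PC_def u_def)
qed

end
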